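(* Let $(a_n)_{n\in\mathbb{N}}$ be a strictly increasing sequence of positive integers which is quasi-arithmetic of degree $d$ for some positive integer $d$. Then there is no real number $\alpha$ such that the sequence $(\{a_n\alpha\})_{n\in\mathbb{N}}$ has Poissonian pair correlations.
   Context: A $d$-dimensional arithmetic progression of size at most $S$ is a set of the form $\{h + \sum_{j=1}^d r_j k_j : r_j \in \mathbb{Z},\ 0 \leq r_j < s_j\}$ with $h, k_1,\ldots,k_d \in \mathbb{Z}$, $s_1,\ldots,s_d$ positive integers and $s_1 s_2\cdots s_d \leq S$. A strictly increasing sequence $(a_n)$ of positive integers is called quasi-arithmetic of degree $d$ if there exist constants $C, K > 0$ and a strictly increasing sequence $(N_i)_{i\geq1}$ of positive integers such that for every $i \geq 1$ there is a subset $A^{(i)} \subset \{a_1,\ldots,a_{N_i}\}$ with $|A^{(i)}| \geq C N_i$ which is contained in a $d$-dimensional arithmetic progression of size at most $K N_i$. $\{x\}$ denotes the fractional part of $x$ and $\|x\|$ the distance from $x$ to the nearest integer. A sequence $(x_n)$ in $[0,1)$ has Poissonian pair correlations if for every $s>0$, $\frac{1}{N}\#\{1 \leq i \neq j \leq N : \|x_i - x_j\| \leq s/N\} \to 2s$ as $N \to \infty$. *)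

theory Defs
  imports "HOL-Analysis.Analysis"
begin

definition dist_int :: "real \<Rightarrow> real" where
  "dist_int x = \<bar>x - round x\<bar>"

definition is_dim_AP :: "nat \<Rightarrow> real \<Rightarrow> int set \<Rightarrow> bool" where
  "is_dim_AP d S P \<longleftrightarrow>
     (\<exists>(h::int) (k::nat \<Rightarrow> int) (s::nat \<Rightarrow> nat).
        (\<forall>j<d. s j > 0) \<and> real (\<Prod>j<d. s j) \<le> S \<and>
        P = {h + (\<Sum>j<d. r j * k j) | r. \<forall>j<d. 0 \<le> r j \<and> r j < int (s j)})"

text \<open>Quasi-arithmetic of degree d (sequence indexed from 1).\<close>
definition quasi_arithmetic :: "nat \<Rightarrow> (nat \<Rightarrow> int) \<Rightarrow> bool" where
  "quasi_arithmetic d a \<longleftrightarrow>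
     (\<exists>(C::real) (K::real) (Ns::nat \<Rightarrow> nat). C > 0 \<and> K > 0 \<and>
        strict_mono Ns \<and> (\<forall>i. Ns i > 0) \<and>
        (\<forall>i. \<exists>A P. A \<subseteq> a ` {1..Ns i} \<and> real (card A) \<ge> C * real (Ns i) \<and>
              is_dim_AP d (K * real (Ns i)) P \<and> A \<subseteq> P))"

text \<open>Poissonian pair correlations (sequence indexed from 1).\<close>
definition poissonian_pc :: "(nat \<Rightarrow> real) \<Rightarrow> bool" where
  "poissonian_pc x \<longleftrightarrow>
     (\<forall>s::real. s > 0 \<longrightarrow>
        ((\<lambda>N. real (card {(i, j). i \<in> {1..N} \<and> j \<in> {1..N} \<and> i \<noteq> j \<and>
                   dist_int (x i - x j) \<le> s / real N}) / real N)
          \<longlonglongrightarrow> 2 * s))"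

end

theory Submission
  imports Defs
begin


lemma dist_int_le: "dist_int x \<le> \<bar>x - of_int n\<bar>"
proof (cases "\<bar>x - of_int n\<bar> < 1/2")
  case True then have "round x = n" by (rule round_unique')
  then show ?thesis by (simp add: dist_int_def)
next
  case False
  have "\<bar>of_int (round x) - x\<bar> \<le> 1/2" by (rule of_int_round_abs_le)
  then show ?thesis using False by (simp add: dist_int_def abs_minus_commute)
qed

lemma dist_int_shift: "dist_int (x + of_int n) = dist_int x"
proof -
  have "round (x + of_int n) = round x + n"
    unfolding round_def by (metis add.commute add.left_commute floor_add_int)
  then show ?thesis by (simp add: dist_int_def)
qed

lemma dist_int_frac: "dist_int (frac u - frac w) = dist_int (u - w)"
proof -
  have "frac u - frac w = (u - w) + of_int (\<lfloor>w\<rfloor> - \<lfloor>u\<rfloor>)"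
    by (simp add: frac_def)
  then show ?thesis using dist_int_shift[of "u - w" "\<lfloor>w\<rfloor> - \<lfloor>u\<rfloor>"] by simp
qed

lemma sum_indicator_card: "finite A \<Longrightarrow> (\<Sum>x\<in>A. if P x then 1 else 0::real) = real (card {x\<in>A. P x})"
  by (simp add: sum.If_cases Int_def)



lemma additive_core:
  fixes A G S :: "int set" and X :: real
  assumes fA: "finite A" and GA: "G \<subseteq> A" and Gne: "G \<noteq> {}" and fS: "finite S"
    and AGS: "\<And>x g. x \<in> A \<Longrightarrow> g \<in> G \<Longrightarrow> x + g \<in> S"
    and Xpos: "0 < X"
    and Xle: "X \<le> real (card A)^2 / real (card S) - real (card A) / real (card G)"
  shows "\<exists>g\<in>G. \<exists>g'\<in>G. g \<noteq> g' \<and> X \<le> real (card {x\<in>A. x + (g - g') \<in> A})"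
proof (rule ccontr)
  assume neg: "\<not> ?thesis"
  define cnt where "cnt v = real (card {x\<in>A. x + v \<in> A})" for v
  have lt: "\<And>g g'. g\<in>G \<Longrightarrow> g'\<in>G \<Longrightarrow> g\<noteq>g' \<Longrightarrow> cnt (g - g') \<le> X"
    using neg unfolding cnt_def by force
  define f where "f y = (\<Sum>x\<in>A. \<Sum>g\<in>G. if x + g = y then 1 else 0::real)" for y
  have fG: "finite G" using fA GA finite_subset by auto
  have Ane: "A \<noteq> {}" using GA Gne by auto
  then obtain x0 where "x0 \<in> A" by auto
  obtain g0 where "g0 \<in> G" using Gne by auto
  have Sne: "S \<noteq> {}" using AGS[OF \<open>x0\<in>A\<close> \<open>g0\<in>G\<close>] by auto
  have s1: "(\<Sum>y\<in>S. f y) = real (card A) * real (card G)"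
  proof -
    have "(\<Sum>y\<in>S. f y) = (\<Sum>x\<in>A. \<Sum>g\<in>G. \<Sum>y\<in>S. if x + g = y then 1 else 0::real)"
      unfolding f_def by (simp only: sum.swap[of _ S])
    also have "\<dots> = (\<Sum>x\<in>A. \<Sum>g\<in>G. 1::real)"
      by (rule sum.cong[OF refl], rule sum.cong[OF refl]) (use AGS fS in \<open>simp add: sum.delta\<close>)
    finally show ?thesis by simp
  qed
  have s2: "(\<Sum>y\<in>S. (f y)^2) = (\<Sum>g\<in>G. \<Sum>g'\<in>G. cnt (g - g'))"
  proof -
    have "(\<Sum>y\<in>S. (f y)^2) = (\<Sum>y\<in>S. \<Sum>x\<in>A. \<Sum>x'\<in>A. \<Sum>g\<in>G. \<Sum>g'\<in>G.
        (if x + g = y then 1 else 0::real) * (if x' + g' = y then 1 else 0))"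
      unfolding f_def power2_eq_square by (simp only: sum_product)
    also have "\<dots> = (\<Sum>x\<in>A. \<Sum>x'\<in>A. \<Sum>g\<in>G. \<Sum>g'\<in>G. \<Sum>y\<in>S.
        (if x + g = y then 1 else 0::real) * (if x' + g' = y then 1 else 0))"
      by (simp only: sum.swap[of _ S])
    also have "\<dots> = (\<Sum>x\<in>A. \<Sum>x'\<in>A. \<Sum>g\<in>G. \<Sum>g'\<in>G. (if x' + g' = x + g then 1 else 0::real))"
    proof (intro sum.cong refl)
      fix x x' g g' assume "x \<in> A" "g \<in> G"
      then have "x + g \<in> S" by (rule AGS)
      have "(\<Sum>y\<in>S. (if x + g = y then 1 else 0::real) * (if x' + g' = y then 1 else 0))
          = (\<Sum>y\<in>S. if x + g = y then (if x' + g' = y then 1 else 0) else 0::real)"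
        by (rule sum.cong) auto
      also have "\<dots> = (if x' + g' = x + g then 1 else 0)"
        using \<open>x + g \<in> S\<close> fS by (simp add: sum.delta)
      finally show "(\<Sum>y\<in>S. (if x + g = y then 1 else 0::real) * (if x' + g' = y then 1 else 0))
          = (if x' + g' = x + g then 1 else 0)" .
    qed
    also have "\<dots> = (\<Sum>g\<in>G. \<Sum>g'\<in>G. \<Sum>x\<in>A. \<Sum>x'\<in>A. (if x' + g' = x + g then 1 else 0::real))"
      by (simp only: sum.swap[of _ A G])
    also have "\<dots> = (\<Sum>g\<in>G. \<Sum>g'\<in>G. cnt (g - g'))"
    proof (intro sum.cong refl)
      fix g g'
      have "(\<Sum>x\<in>A. \<Sum>x'\<in>A. (if x' + g' = x + g then 1 else 0::real))
          = (\<Sum>x\<in>A. if x + (g - g') \<in> A then 1 else 0)"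
      proof (rule sum.cong[OF refl])
        fix x
        have "(\<Sum>x'\<in>A. (if x' + g' = x + g then 1 else 0::real))
            = (\<Sum>x'\<in>A. (if x' = x + (g - g') then 1 else 0::real))"
          by (rule sum.cong) auto
        also have "\<dots> = (if x + (g - g') \<in> A then 1 else 0)"
          using fA by (simp add: sum.delta)
        finally show "(\<Sum>x'\<in>A. (if x' + g' = x + g then 1 else 0::real))
            = (if x + (g - g') \<in> A then 1 else 0)" .
      qed
      also have "\<dots> = cnt (g - g')"
        unfolding cnt_def using fA by (rule sum_indicator_card)
      finally show "(\<Sum>x\<in>A. \<Sum>x'\<in>A. (if x' + g' = x + g then 1 else 0::real)) = cnt (g - g')" .
    qed
    finally show ?thesis .
  qed
  define T where "T = (\<Sum>g\<in>G. \<Sum>g'\<in>G. cnt (g - g'))"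
  have CS: "(real (card A) * real (card G))^2 \<le> T * real (card S)"
    using sum_squared_le_sum_of_squares[of f S] s1 s2 unfolding T_def by simp
  have cnt0: "cnt 0 = real (card A)" unfolding cnt_def by simp
  have Tle: "T \<le> real (card G) * (real (card A) + (real (card G) - 1) * X)"
  proof -
    have "T \<le> (\<Sum>g\<in>G. real (card A) + (real (card G) - 1) * X)"
      unfolding T_def
    proof (rule sum_mono)
      fix g assume g: "g \<in> G"
      have "(\<Sum>g'\<in>G. cnt (g - g')) = cnt (g - g) + (\<Sum>g'\<in>G - {g}. cnt (g - g'))"
        using fG g by (simp add: sum.remove)
      also have "(\<Sum>g'\<in>G - {g}. cnt (g - g')) \<le> real (card (G - {g})) * X"
        by (rule sum_bounded_above) (use lt g in auto)
      also have "real (card (G - {g})) = real (card G) - 1"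
      proof -
        have c1: "card (G - {g}) = card G - 1" using fG g by (simp add: card_Diff_singleton)
        have "card G \<noteq> 0" using fG g by auto
        then have "card G \<ge> 1" by linarith
        then show ?thesis using c1 by (simp add: of_nat_diff)
      qed
      finally show "(\<Sum>g'\<in>G. cnt (g - g')) \<le> real (card A) + (real (card G) - 1) * X"
        using cnt0 by simp
    qed
    then show ?thesis by simp
  qed
  define a where "a = real (card A)"
  define n where "n = real (card G)"
  define s where "s = real (card S)"
  have apos: "a > 0" unfolding a_def using fA Ane by (simp add: card_gt_0_iff)
  have npos: "n > 0" unfolding n_def using fG Gne by (simp add: card_gt_0_iff)
  have spos: "s > 0" unfolding s_def using fS Sne by (simp add: card_gt_0_iff)
  have h1: "a^2 * n^2 / s \<le> T" using CS spos unfolding a_def n_def s_def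
    by (simp add: pos_divide_le_eq power_mult_distrib)
  have h2: "n^2 * X \<le> a^2 * n^2 / s - n * a"
  proof -
    have "n^2 * X \<le> n^2 * (a^2 / s - a / n)"
      using Xle npos unfolding a_def n_def s_def by (intro mult_left_mono) auto
    also have "\<dots> = a^2 * n^2 / s - n * a" using npos by (simp add: field_simps power2_eq_square)
    finally show ?thesis .
  qed
  have h3: "T \<le> n * a + n * (n - 1) * X" using Tle unfolding a_def n_def by (simp add: algebra_simps)
  from h1 h2 h3 have "n^2 * X \<le> n * (n - 1) * X" by linarith
  then have "n * X \<le> 0" by (simp add: algebra_simps power2_eq_square)
  with mult_pos_pos[OF npos Xpos] show False by linarith
qed



lemma floor_eq_close: "\<lfloor>x::real\<rfloor> = \<lfloor>y\<rfloor> \<Longrightarrow> \<bar>x - y\<bar> < 1"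
  using of_int_floor_le[of x] of_int_floor_le[of y] real_of_int_floor_add_one_gt[of x]
    real_of_int_floor_add_one_gt[of y] by (simp add: abs_less_iff) linarith

lemma pigeon_arcs:
  fixes A :: "int set" and M :: nat and \<alpha> :: real
  assumes fA: "finite A" and Ane: "A \<noteq> {}" and M1: "M \<ge> 1"
  shows "\<exists>G \<subseteq> A. G \<noteq> {} \<and> real (card A) \<le> real M * real (card G) \<and>
     (\<forall>g\<in>G. \<forall>g'\<in>G. dist_int (real_of_int (g - g') * \<alpha>) \<le> 1 / real M)"
proof -
  define k where "k g = nat \<lfloor>real M * frac (real_of_int g * \<alpha>)\<rfloor>" for g :: int
  define cls where "cls t = {g\<in>A. k g = t}" for t
  have kM: "k g < M" for g
  proof -
    have "real M * frac (real_of_int g * \<alpha>) < real M * 1"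
      using M1 frac_lt_1 by (intro mult_strict_left_mono) auto
    then have "\<lfloor>real M * frac (real_of_int g * \<alpha>)\<rfloor> < int M"
      by (simp add: floor_less_iff)
    then show ?thesis unfolding k_def by (simp add: nat_less_iff)
  qed
  have Aeq: "A = (\<Union>t\<in>{..<M}. cls t)" unfolding cls_def using kM by auto
  have cardA: "card A = (\<Sum>t\<in>{..<M}. card (cls t))"
    by (subst Aeq, rule card_UN_disjoint) (use fA in \<open>auto simp: cls_def\<close>)
  have "\<exists>t<M. real (card A) \<le> real M * real (card (cls t))"
  proof (rule ccontr)
    assume "\<not> ?thesis"
    then have lt: "\<And>t. t \<in> {..<M} \<Longrightarrow> real (card (cls t)) < real (card A) / real M"
      using M1 by (auto simp: field_simps not_le)
    have "real (card A) = (\<Sum>t\<in>{..<M}. real (card (cls t)))" using cardA by simp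
    also have "\<dots> < (\<Sum>t\<in>{..<M}. real (card A) / real M)"
      by (rule sum_strict_mono) (use lt M1 in \<open>auto simp: lessThan_empty_iff\<close>)
    also have "\<dots> = real (card A)" using M1 by simp
    finally show False by simp
  qed
  then obtain t where t: "t < M" "real (card A) \<le> real M * real (card (cls t))" by auto
  have cA: "card A > 0" using fA Ane by (simp add: card_gt_0_iff)
  have Gne: "cls t \<noteq> {}"
  proof
    assume "cls t = {}"
    with t(2) cA show False by simp
  qed
  have dist: "dist_int (real_of_int (g - g') * \<alpha>) \<le> 1 / real M" if g: "g \<in> cls t" "g' \<in> cls t" for g g'
  proof -
    define u where "u = frac (real_of_int g * \<alpha>)"
    define w where "w = frac (real_of_int g' * \<alpha>)"
    have "nat \<lfloor>real M * u\<rfloor> = nat \<lfloor>real M * w\<rfloor>" using g unfolding cls_def k_def u_def w_def by auto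
    moreover have "\<lfloor>real M * u\<rfloor> \<ge> 0" "\<lfloor>real M * w\<rfloor> \<ge> 0"
      unfolding u_def w_def by (auto simp: frac_ge_0)
    ultimately have "\<lfloor>real M * u\<rfloor> = \<lfloor>real M * w\<rfloor>" by (metis nat_eq_iff2)
    then have "\<bar>real M * u - real M * w\<bar> < 1" by (rule floor_eq_close)
    then have "real M * \<bar>u - w\<bar> < 1" by (simp add: right_diff_distrib[symmetric] abs_mult)
    then have uw: "\<bar>u - w\<bar> \<le> 1 / real M" using M1 by (simp add: field_simps)
    have "dist_int (real_of_int (g - g') * \<alpha>) = dist_int (u - w)"
      unfolding u_def w_def dist_int_frac by (simp add: left_diff_distrib)
    also have "\<dots> \<le> \<bar>(u - w) - of_int 0\<bar>" by (rule dist_int_le)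
    finally show ?thesis using uw by simp
  qed
  show ?thesis
    by (rule exI[of _ "cls t"]) (use Gne t dist in \<open>auto simp: cls_def\<close>)
qed



lemma AP_sumset:
  assumes "is_dim_AP d S P"
  shows "\<exists>Q. finite Q \<and> real (card Q) \<le> 2^d * S \<and> (\<forall>x\<in>P. \<forall>y\<in>P. x + y \<in> Q)"
proof -
  obtain h :: int and k :: "nat \<Rightarrow> int" and s :: "nat \<Rightarrow> nat" where
    sp: "\<forall>j<d. s j > 0" and sS: "real (\<Prod>j<d. s j) \<le> S" and
    P: "P = {h + (\<Sum>j<d. r j * k j) | r. \<forall>j<d. 0 \<le> r j \<and> r j < int (s j)}"
    using assms unfolding is_dim_AP_def by blast
  define B where "B = PiE {..<d} (\<lambda>j. {0..<2 * int (s j)})"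
  define Q where "Q = (\<lambda>w. 2 * h + (\<Sum>j<d. w j * k j)) ` B"
  have fB: "finite B" unfolding B_def by (intro finite_PiE) auto
  have "card Q \<le> card B" unfolding Q_def using fB by (rule card_image_le)
  also have "card B = (\<Prod>j<d. 2 * s j)"
    unfolding B_def by (simp add: card_PiE nat_mult_distrib)
  also have "\<dots> = 2^d * (\<Prod>j<d. s j)" by (simp add: prod.distrib)
  finally have "real (card Q) \<le> 2^d * real (\<Prod>j<d. s j)"
    by (metis of_nat_le_iff of_nat_mult of_nat_numeral of_nat_power)
  also have "\<dots> \<le> 2^d * S" using sS by simp
  finally have cQ: "real (card Q) \<le> 2^d * S" .
  have mem: "x + y \<in> Q" if "x \<in> P" "y \<in> P" for x y
  proof -
    obtain r where r: "\<forall>j<d. 0 \<le> r j \<and> r j < int (s j)" "x = h + (\<Sum>j<d. r j * k j)"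
      using \<open>x \<in> P\<close> P by blast
    obtain r' where r': "\<forall>j<d. 0 \<le> r' j \<and> r' j < int (s j)" "y = h + (\<Sum>j<d. r' j * k j)"
      using \<open>y \<in> P\<close> P by blast
    define w where "w = restrict (\<lambda>j. r j + r' j) {..<d}"
    have wB: "w \<in> B" unfolding w_def B_def using r(1) r'(1) by (auto simp: PiE_iff; smt (verit))
    have "(\<Sum>j<d. w j * k j) = (\<Sum>j<d. r j * k j + r' j * k j)"
      unfolding w_def by (intro sum.cong) (auto simp: distrib_right)
    then have "x + y = 2 * h + (\<Sum>j<d. w j * k j)"
      using r(2) r'(2) by (simp add: sum.distrib)
    then show ?thesis unfolding Q_def using wB by blast
  qed
  show ?thesis using fB cQ mem unfolding Q_def by blast
qed


theorem proposition2:
  fixes a :: "nat \<Rightarrow> int" and d :: nat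
  assumes "d \<ge> 1"
    and "strict_mono_on {1..} a"
    and "\<forall>n\<ge>1. a n > 0"
    and "quasi_arithmetic d a"
  shows "\<not> (\<exists>\<alpha>::real. poissonian_pc (\<lambda>n. frac (real_of_int (a n) * \<alpha>)))"
proof
  assume "\<exists>\<alpha>::real. poissonian_pc (\<lambda>n. frac (real_of_int (a n) * \<alpha>))"
  then obtain \<alpha> :: real where ppc: "poissonian_pc (\<lambda>n. frac (real_of_int (a n) * \<alpha>))" by blast
  define x where "x n = frac (real_of_int (a n) * \<alpha>)" for n
  define cs where "cs N s = {(i, j). i \<in> {1..N} \<and> j \<in> {1..N} \<and> i \<noteq> j \<and>
                   dist_int (x i - x j) \<le> s / real N}" for N :: nat and s :: real
  have ppc': "\<And>s. s > 0 \<Longrightarrow> (\<lambda>N. real (card (cs N s)) / real N) \<longlonglongrightarrow> 2 * s"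
    using ppc unfolding poissonian_pc_def cs_def x_def by blast
  have csfin: "finite (cs N s)" for N s
    by (rule finite_subset[of _ "{1..N} \<times> {1..N}"]) (auto simp: cs_def)
  have csmono: "cs N s \<subseteq> cs N s'" if "s \<le> s'" for N s s'
  proof -
    have "s / real N \<le> s' / real N" using that by (simp add: divide_right_mono)
    then show ?thesis unfolding cs_def by auto
  qed
  obtain C K :: real and Ns :: "nat \<Rightarrow> nat" where CK: "C > 0" "K > 0" and Nsm: "strict_mono Ns"
    and hyp: "\<forall>i. \<exists>A P. A \<subseteq> a ` {1..Ns i} \<and> real (card A) \<ge> C * real (Ns i) \<and>
              is_dim_AP d (K * real (Ns i)) P \<and> A \<subseteq> P"
    using assms(4) unfolding quasi_arithmetic_def by blast
  define \<theta> where "\<theta> = C^2 / (2^(d+1) * K)"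
  have \<theta>pos: "\<theta> > 0" unfolding \<theta>_def using CK by simp
  define \<eta> where "\<eta> = \<theta> / 4"
  define \<epsilon> where "\<epsilon> = \<theta> / 8"
  have \<eta>pos: "\<eta> > 0" "\<epsilon> > 0" unfolding \<eta>_def \<epsilon>_def using \<theta>pos by auto
  define m where "m = nat \<lceil>2 / (\<theta> * \<eta>)\<rceil>"
  have m_ge: "real m * \<eta> \<ge> 2 / \<theta>"
  proof -
    have "2 / (\<theta> * \<eta>) \<le> real m" unfolding m_def by linarith
    then show ?thesis using \<theta>pos \<eta>pos by (simp add: field_simps)
  qed
  have "\<forall>\<^sub>F N in sequentially. \<forall>t\<in>{1..m}.
          \<bar>real (card (cs N (real t * \<eta>))) / real N - 2 * (real t * \<eta>)\<bar> < \<epsilon>"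
  proof (rule eventually_ball_finite)
    show "finite {1..m}" by simp
    show "\<forall>t\<in>{1..m}. \<forall>\<^sub>F N in sequentially.
          \<bar>real (card (cs N (real t * \<eta>))) / real N - 2 * (real t * \<eta>)\<bar> < \<epsilon>"
    proof
      fix t assume "t \<in> {1..m}"
      then have "real t * \<eta> > 0" using \<eta>pos by auto
      from ppc'[OF this] have "\<forall>\<^sub>F N in sequentially.
          dist (real (card (cs N (real t * \<eta>))) / real N) (2 * (real t * \<eta>)) < \<epsilon>"
        using \<eta>pos by (simp add: tendsto_iff)
      then show "\<forall>\<^sub>F N in sequentially.
          \<bar>real (card (cs N (real t * \<eta>))) / real N - 2 * (real t * \<eta>)\<bar> < \<epsilon>"
        by (simp add: dist_real_def)
    qed
  qed
  then obtain N0 where N0: "\<And>N t. N \<ge> N0 \<Longrightarrow> t \<in> {1..m} \<Longrightarrow>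
          \<bar>real (card (cs N (real t * \<eta>))) / real N - 2 * (real t * \<eta>)\<bar> < \<epsilon>"
    unfolding eventually_sequentially by blast
  define i where "i = N0 + nat \<lceil>1 / \<theta>\<rceil>"
  define N where "N = Ns i"
  have Ni: "N \<ge> i" unfolding N_def using seq_suble[OF Nsm] by simp
  have NN0: "N \<ge> N0" using Ni unfolding i_def by simp
  have "real N \<ge> 1 / \<theta>"
  proof -
    have "1 / \<theta> \<le> real (nat \<lceil>1 / \<theta>\<rceil>)" by linarith
    also have "\<dots> \<le> real N"
    proof -
      have "nat \<lceil>1 / \<theta>\<rceil> \<le> N" using Ni unfolding i_def by linarith
      then show ?thesis by (simp only: of_nat_le_iff)
    qed
    finally show ?thesis .
  qed
  then have \<theta>N: "\<theta> * real N \<ge> 1" using \<theta>pos by (simp add: field_simps)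
  have Npos: "real N > 0" using \<theta>N \<theta>pos by (metis mult_eq_0_iff not_one_le_zero of_nat_0 of_nat_0_less_iff
        gr0I)
  obtain A P where AN: "A \<subseteq> a ` {1..N}" and cA: "real (card A) \<ge> C * real N"
    and APd: "is_dim_AP d (K * real N) P" and AP: "A \<subseteq> P"
    using hyp unfolding N_def by blast
  have fA: "finite A" using AN finite_surj by blast
  have cApos: "real (card A) > 0" using cA CK Npos by (smt (verit) mult_pos_pos)
  then have Ane: "A \<noteq> {}" by auto
  define M where "M = nat \<lfloor>\<theta> * real N\<rfloor>"
  have fl1: "\<lfloor>\<theta> * real N\<rfloor> \<ge> 1" using \<theta>N by (simp add: le_floor_iff)
  have Mr: "real M = of_int \<lfloor>\<theta> * real N\<rfloor>" unfolding M_def using fl1 by simp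
  have fl2: "of_int \<lfloor>\<theta> * real N\<rfloor> \<le> \<theta> * real N" by (rule of_int_floor_le)
  have fl3: "\<theta> * real N < of_int \<lfloor>\<theta> * real N\<rfloor> + 1" by (rule real_of_int_floor_add_one_gt)
  have fl4: "(1::real) \<le> of_int \<lfloor>\<theta> * real N\<rfloor>" using fl1 by simp
  have M1: "M \<ge> 1" unfolding M_def using fl1 by linarith
  have Mle: "real M \<le> \<theta> * real N" using Mr fl2 by linarith
  have Mge: "real M \<ge> \<theta> * real N / 2" using Mr fl3 fl4 by linarith
  obtain G where GA: "G \<subseteq> A" and Gne: "G \<noteq> {}" and cG: "real (card A) \<le> real M * real (card G)"
    and Gd: "\<forall>g\<in>G. \<forall>g'\<in>G. dist_int (real_of_int (g - g') * \<alpha>) \<le> 1 / real M"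
    using pigeon_arcs[OF fA Ane M1, of \<alpha>] by blast
  obtain Q where fQ: "finite Q" and cQ: "real (card Q) \<le> 2^d * (K * real N)"
    and PQ: "\<forall>x\<in>P. \<forall>y\<in>P. x + y \<in> Q"
    using AP_sumset[OF APd] by blast
  have AGQ: "\<And>x g. x \<in> A \<Longrightarrow> g \<in> G \<Longrightarrow> x + g \<in> Q" using PQ AP GA by blast
  have Qpos: "real (card Q) > 0"
  proof -
    obtain x0 where "x0 \<in> G" using Gne by auto
    then have "x0 + x0 \<in> Q" using AGQ GA by blast
    then show ?thesis using fQ by (simp add: card_gt_0_iff) blast
  qed
  have cGpos: "real (card G) > 0" using Gne fA GA finite_subset by (simp add: card_gt_0_iff) blast
  have Xle: "\<theta> * real N \<le> real (card A)^2 / real (card Q) - real (card A) / real (card G)"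
  proof -
    have "real (card A) / real (card G) \<le> real M" using cG cGpos by (simp add: divide_le_eq)
    then have t1: "real (card A) / real (card G) \<le> \<theta> * real N" using Mle by linarith
    have "(C * real N)^2 \<le> real (card A)^2"
      using cA CK Npos by (intro power_mono) auto
    then have "(C * real N)^2 / (2^d * (K * real N)) \<le> real (card A)^2 / (2^d * (K * real N))"
      using CK Npos by (intro divide_right_mono) auto
    also have "\<dots> \<le> real (card A)^2 / real (card Q)"
      using cQ Qpos by (intro divide_left_mono) auto
    finally have t2: "(C * real N)^2 / (2^d * (K * real N)) \<le> real (card A)^2 / real (card Q)" .
    have "(C * real N)^2 / (2^d * (K * real N)) = 2 * (\<theta> * real N)"
      unfolding \<theta>_def using CK Npos by (simp add: field_simps power2_eq_square)
    with t1 t2 show ?thesis by linarith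
  qed
  obtain g g' where gG: "g \<in> G" "g' \<in> G" "g \<noteq> g'"
    and big: "\<theta> * real N \<le> real (card {y\<in>A. y + (g - g') \<in> A})"
    using additive_core[OF fA GA Gne fQ AGQ _ Xle] \<theta>N by auto
  define v where "v = g - g'"
  have v0: "v \<noteq> 0" using gG unfolding v_def by simp
  define D where "D = dist_int (real_of_int v * \<alpha>)"
  have Dle: "D \<le> 2 / (\<theta> * real N)"
  proof -
    have "D \<le> 1 / real M" using Gd gG unfolding D_def v_def by blast
    also have "\<dots> \<le> 2 / (\<theta> * real N)" using Mge M1 \<theta>N by (simp add: field_simps)
    finally show ?thesis .
  qed
  have D0: "D \<ge> 0" unfolding D_def dist_int_def by simp
  have inj: "inj_on a {1..N}"
    using strict_mono_on_imp_inj_on[OF assms(2)] by (rule inj_on_subset) auto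
  define E where "E = {j\<in>{1..N}. a j \<in> A \<and> a j + v \<in> A}"
  have "{y\<in>A. y + v \<in> A} = a ` E" unfolding E_def using AN by auto
  moreover have "E \<subseteq> {1..N}" unfolding E_def by auto
  then have "card (a ` E) = card E" using card_image[OF inj_on_subset[OF inj]] by blast
  ultimately have cE: "card E = card {y\<in>A. y + v \<in> A}" by simp
  define idx where "idx j = (SOME i. i \<in> {1..N} \<and> a i = a j + v)" for j
  have idx: "idx j \<in> {1..N} \<and> a (idx j) = a j + v" if "j \<in> E" for j
  proof -
    have "a j + v \<in> a ` {1..N}" using that AN unfolding E_def by auto
    then have "\<exists>i. i \<in> {1..N} \<and> a i = a j + v" by auto
    then show ?thesis unfolding idx_def by (rule someI_ex)
  qed
  define PE where "PE = (\<lambda>j. (idx j, j)) ` E"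
  have cPE: "card PE = card E" unfolding PE_def by (rule card_image) (auto simp: inj_on_def)
  have PEbig: "real (card PE) \<ge> \<theta> * real N" using big cPE cE unfolding v_def by simp
  have PEdist: "i \<in> {1..N} \<and> j \<in> {1..N} \<and> i \<noteq> j \<and> dist_int (x i - x j) = D" if "(i, j) \<in> PE" for i j
  proof -
    from that obtain j' where j': "j' \<in> E" "(i, j) = (idx j', j')" unfolding PE_def by auto
    then have ij: "j = j'" "i = idx j'" by auto
    have ai: "a i = a j + v" "i \<in> {1..N}" using idx[OF j'(1)] ij by auto
    have "j \<in> {1..N}" using j' ij unfolding E_def by auto
    moreover have "i \<noteq> j" using ai v0 by auto
    moreover have "dist_int (x i - x j) = D"
      unfolding x_def D_def dist_int_frac ai(1) by (simp add: algebra_simps)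
    ultimately show ?thesis using ai by auto
  qed
  define xv where "xv = real N * D"
  have xv0: "xv \<ge> 0" unfolding xv_def using D0 by simp
  have xvle: "xv \<le> real m * \<eta>"
  proof -
    have "xv \<le> real N * (2 / (\<theta> * real N))" unfolding xv_def using Dle Npos
      by (intro mult_left_mono) auto
    also have "\<dots> = 2 / \<theta>" using Npos by simp
    finally show ?thesis using m_ge by linarith
  qed
  define t where "t = max 1 (nat \<lceil>xv / \<eta>\<rceil>)"
  have t1: "t \<ge> 1" unfolding t_def by simp
  have tm: "t \<le> m"
  proof -
    have "xv / \<eta> \<le> real m" using xvle \<eta>pos by (simp add: divide_le_eq)
    then have "nat \<lceil>xv / \<eta>\<rceil> \<le> m" by linarith
    moreover have "1 \<le> m"
    proof -
      have "0 < 2 / \<theta>" using \<theta>pos by simp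
      then have "real m * \<eta> > 0" using m_ge by linarith
      then show ?thesis using \<eta>pos by (simp add: zero_less_mult_iff)
    qed
    ultimately show ?thesis unfolding t_def by simp
  qed
  have xvt: "xv \<le> real t * \<eta>"
  proof -
    have "xv / \<eta> \<le> real t" unfolding t_def by linarith
    then show ?thesis using \<eta>pos by (simp add: divide_le_eq)
  qed
  have PEsub: "PE \<subseteq> cs N (real t * \<eta>)"
  proof
    fix p assume "p \<in> PE"
    then obtain i j where p: "p = (i, j)" "(i, j) \<in> PE" by (cases p) auto
    have "D \<le> real t * \<eta> / real N" using xvt Npos unfolding xv_def by (simp add: field_simps)
    then show "p \<in> cs N (real t * \<eta>)" using PEdist[OF p(2)] p(1) unfolding cs_def by auto
  qed
  have upper: "real (card (cs N (real t * \<eta>))) < (2 * (real t * \<eta>) + \<epsilon>) * real N"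
  proof -
    have "real (card (cs N (real t * \<eta>))) / real N < 2 * (real t * \<eta>) + \<epsilon>"
      using N0[OF NN0, of t] t1 tm by auto
    then show ?thesis using Npos by (simp add: divide_less_eq)
  qed
  show False
  proof (cases "t = 1")
    case True
    have "real (card PE) \<le> real (card (cs N (real t * \<eta>)))"
      using card_mono[OF csfin PEsub] by simp
    with upper PEbig True show False unfolding \<eta>_def \<epsilon>_def using Npos \<theta>pos
      by (simp add: field_simps)
  next
    case False
    then have t2: "t \<ge> 2" using t1 by simp
    have "xv / \<eta> > real t - 1"
    proof -
      have "t = nat \<lceil>xv / \<eta>\<rceil>" using False unfolding t_def by linarith
      then have "int t \<le> \<lceil>xv / \<eta>\<rceil>" using t2 by (cases "\<lceil>xv / \<eta>\<rceil> \<ge> 0") auto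
      then have "of_int (int t) - 1 < xv / \<eta>" by (simp only: le_ceiling_iff)
      then show ?thesis by simp
    qed
    then have xvgt: "xv > (real t - 1) * \<eta>" using \<eta>pos by (simp add: field_simps)
    define t' where "t' = t - 1"
    have t'r: "real t' = real t - 1" unfolding t'_def using t2 by simp
    have t'm: "t' \<in> {1..m}" unfolding t'_def using t2 tm by auto
    have disj: "PE \<inter> cs N (real t' * \<eta>) = {}"
    proof (rule ccontr)
      assume "PE \<inter> cs N (real t' * \<eta>) \<noteq> {}"
      then obtain i j where ij: "(i, j) \<in> PE" "(i, j) \<in> cs N (real t' * \<eta>)" by auto
      then have "D \<le> real t' * \<eta> / real N" using PEdist[OF ij(1)] unfolding cs_def by auto
      then have "xv \<le> real t' * \<eta>" unfolding xv_def using Npos by (simp add: field_simps)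
      then show False using xvgt t'r by simp
    qed
    have sub2: "cs N (real t' * \<eta>) \<subseteq> cs N (real t * \<eta>)"
      by (rule csmono) (use t'r \<eta>pos in simp)
    have "card (PE \<union> cs N (real t' * \<eta>)) = card PE + card (cs N (real t' * \<eta>))"
      by (rule card_Un_disjoint) (use csfin finite_subset[OF PEsub csfin] disj in auto)
    moreover have "card (PE \<union> cs N (real t' * \<eta>)) \<le> card (cs N (real t * \<eta>))"
      by (rule card_mono[OF csfin]) (use PEsub sub2 in auto)
    ultimately have sumle: "real (card PE) + real (card (cs N (real t' * \<eta>))) \<le> real (card (cs N (real t * \<eta>)))"
      by simp
    have lower: "real (card (cs N (real t' * \<eta>))) > (2 * (real t' * \<eta>) - \<epsilon>) * real N"
    proof -
      have "real (card (cs N (real t' * \<eta>))) / real N > 2 * (real t' * \<eta>) - \<epsilon>"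
        using N0[OF NN0 t'm] by auto
      then show ?thesis using Npos by (simp add: less_divide_eq)
    qed
    have "real (card PE) < (2 * \<eta> + 2 * \<epsilon>) * real N"
      using sumle upper lower t'r by (simp add: algebra_simps)
    with PEbig show False unfolding \<eta>_def \<epsilon>_def using Npos \<theta>pos
      by (simp add: field_simps)
  qed
qed

end
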